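(* Let $n\geq 2$ be an integer and let $\sigma\colon E(K_{4n})\to\{-1,1\}$ be such that the graph $\left(V(K_{4n}),\sigma^{-1}(1)\right)$ is the disjoint union of a complete graph of order $3n+2$ and $n-2$ isolated vertices. Then $\left|\sigma\left(E(K_{4n})\right)\right|=n^2+11n+2$, and $|\sigma(M)|\geq 4$ for every perfect matching $M$ in $K_{4n}$.
   Context: $K_{4n}$ denotes the complete graph on $4n$ vertices, with vertex set $V(K_{4n})$ and edge set $E(K_{4n})$. For a set $F$ of edges, $\sigma(F)=\sum_{e\in F}\sigma(e)$; $\sigma^{-1}(1)$ is the set of edges with value $1$. *)

theory Defs
  imports Main
begin

definition complete_edges :: "'a set \<Rightarrow> 'a set set" where
  "complete_edges V = {e. \<exists>u v. u \<in> V \<and> v \<in> V \<and> u \<noteq> v \<and> e = {u, v}}"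

definition perfect_matching :: "'a set \<Rightarrow> 'a set set \<Rightarrow> bool" where
  "perfect_matching V M \<longleftrightarrow>
     M \<subseteq> complete_edges V \<and>
     (\<forall>e\<in>M. \<forall>f\<in>M. e \<noteq> f \<longrightarrow> e \<inter> f = {}) \<and>
     (\<forall>v\<in>V. \<exists>e\<in>M. v \<in> e)"

definition sigma_sum :: "('a set \<Rightarrow> int) \<Rightarrow> 'a set set \<Rightarrow> int" where
  "sigma_sum \<sigma> F = (\<Sum>e\<in>F. \<sigma> e)"

end

theory Submission
  imports Defs
begin

lemma ce_eq: "complete_edges V = {B. B \<subseteq> V \<and> card B = 2}"
  unfolding complete_edges_def by (auto simp: card_2_iff)

lemma ce_card: "finite V \<Longrightarrow> card (complete_edges V) = card V choose 2"
  by (simp add: ce_eq n_subsets)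

lemma ce_fin: "finite V \<Longrightarrow> finite (complete_edges V)"
  unfolding ce_eq by (rule finite_subset[of _ "Pow V"]) auto

lemma choose2_int: "2 * int (m choose 2) = int m * (int m - 1)"
proof -
  have "even (m * (m - 1))" by (cases "even m") auto
  then have "2 * (m choose 2) = m * (m - 1)" by (simp add: choose_two)
  then have "int (2 * (m choose 2)) = int (m * (m - 1))" by simp
  then show ?thesis by (cases m) (auto simp: algebra_simps)
qed

theorem mainTheorem5:
  fixes V :: "'a set" and n :: nat and \<sigma> :: "'a set \<Rightarrow> int"
  assumes "n \<ge> 2"
    and "finite V" and "card V = 4 * n"
    and "\<forall>e\<in>complete_edges V. \<sigma> e \<in> {-1, 1}"
    and "\<exists>S. S \<subseteq> V \<and> card S = 3 * n + 2 \<and>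
           (\<forall>e\<in>complete_edges V. \<sigma> e = 1 \<longleftrightarrow> e \<subseteq> S)"
  shows "\<bar>sigma_sum \<sigma> (complete_edges V)\<bar> = int (n^2 + 11 * n + 2) \<and>
         (\<forall>M. perfect_matching V M \<longrightarrow> \<bar>sigma_sum \<sigma> M\<bar> \<ge> 4)"
proof -
  obtain S where SV: "S \<subseteq> V" and cS: "card S = 3 * n + 2"
    and Sp: "\<forall>e\<in>complete_edges V. \<sigma> e = 1 \<longleftrightarrow> e \<subseteq> S" using assms(5) by blast
  have fS: "finite S" using SV assms(2) finite_subset by blast
  have sig: "\<And>e. e \<in> complete_edges V \<Longrightarrow> \<sigma> e = (if e \<subseteq> S then 1 else -1)"
    using Sp assms(4) by force
  have gen: "sigma_sum \<sigma> F = int (card {e\<in>F. e \<subseteq> S}) - int (card {e\<in>F. \<not> e \<subseteq> S})"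
    if F: "F \<subseteq> complete_edges V" "finite F" for F
  proof -
    have "sigma_sum \<sigma> F = (\<Sum>e\<in>F. (if e \<subseteq> S then 1 else -1::int))"
      unfolding sigma_sum_def using F(1) sig by (intro sum.cong) (simp_all add: subset_iff)
    also have "\<dots> = (\<Sum>e\<in>{e\<in>F. e \<subseteq> S}. 1) + (\<Sum>e\<in>{e\<in>F. \<not> e \<subseteq> S}. -1::int)"
      by (subst sum.If_cases[OF F(2)]) (simp add: Collect_conj_eq Int_commute Diff_eq Collect_neg_eq)
    finally show ?thesis by simp
  qed
  have fE: "finite (complete_edges V)" using ce_fin assms(2) .
  have P1: "{e\<in>complete_edges V. e \<subseteq> S} = complete_edges S"
    using SV unfolding complete_edges_def by blast
  have cpos: "card {e\<in>complete_edges V. e \<subseteq> S} = card S choose 2"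
    using P1 ce_card fS by simp
  have split: "card {e\<in>complete_edges V. e \<subseteq> S} + card {e\<in>complete_edges V. \<not> e \<subseteq> S}
      = card (complete_edges V)"
  proof -
    have "{e\<in>complete_edges V. e \<subseteq> S} \<union> {e\<in>complete_edges V. \<not> e \<subseteq> S} = complete_edges V" by blast
    moreover have "{e\<in>complete_edges V. e \<subseteq> S} \<inter> {e\<in>complete_edges V. \<not> e \<subseteq> S} = {}" by blast
    ultimately show ?thesis
      using card_Un_disjoint[of "{e\<in>complete_edges V. e \<subseteq> S}" "{e\<in>complete_edges V. \<not> e \<subseteq> S}"] fE by simp
  qed
  have call: "card (complete_edges V) = card V choose 2" using ce_card assms(2) .
  have A: "sigma_sum \<sigma> (complete_edges V) = int (n^2 + 11 * n + 2)"
  proof -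
    have "sigma_sum \<sigma> (complete_edges V) = 2 * int (card S choose 2) - int (card V choose 2)"
      using gen[OF order_refl fE] cpos split call by linarith
    also have "\<dots> = int (n^2 + 11 * n + 2)"
    proof -
      have e1: "2 * int (card S choose 2) = int (3*n+2) * (int (3*n+2) - 1)"
        using choose2_int[of "card S"] cS by simp
      have e2: "2 * int (card V choose 2) = int (4*n) * (int (4*n) - 1)"
        using choose2_int[of "card V"] assms(3) by simp
      have k: "int (3*n+2) * (int (3*n+2) - 1) * 2 - int (4*n) * (int (4*n) - 1) = 2 * int (n^2 + 11 * n + 2)"
        by (simp add: algebra_simps power2_eq_square)
      have gl: "\<And>x y a b c::int. 2*x = a \<Longrightarrow> 2*y = b \<Longrightarrow> a*2 - b = 2*c \<Longrightarrow> 2*x - y = c"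
        by linarith
      show ?thesis by (rule gl[OF e1 e2 k])
    qed
    finally show ?thesis .
  qed
  have B: "\<bar>sigma_sum \<sigma> M\<bar> \<ge> 4" if pm: "perfect_matching V M" for M
  proof -
    have MV: "M \<subseteq> complete_edges V" and dj: "\<forall>e\<in>M. \<forall>f\<in>M. e \<noteq> f \<longrightarrow> e \<inter> f = {}"
      and cov: "\<forall>v\<in>V. \<exists>e\<in>M. v \<in> e" using pm unfolding perfect_matching_def by auto
    have fM: "finite M" using MV fE finite_subset by blast
    have c2: "\<And>e. e \<in> M \<Longrightarrow> card e = 2 \<and> e \<subseteq> V" using MV ce_eq by blast
    have UV: "\<Union>M = V" using c2 cov by blast
    have "card (\<Union>M) = sum card M"
      by (rule card_Union_disjoint) (use dj c2 in \<open>auto simp: pairwise_def disjnt_def intro: card_ge_0_finite\<close>)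
    also have "\<dots> = 2 * card M" using c2 by simp
    finally have cM: "card M = 2 * n" using UV assms(3) by simp
    let ?P = "{e\<in>M. e \<subseteq> S}" and ?N = "{e\<in>M. \<not> e \<subseteq> S}"
    have sp: "card ?P + card ?N = card M"
    proof -
      have "?P \<union> ?N = M" by blast
      moreover have "?P \<inter> ?N = {}" by blast
      ultimately show ?thesis using card_Un_disjoint[of ?P ?N] fM by simp
    qed
    define g where "g e = (SOME v. v \<in> e \<and> v \<notin> S)" for e
    have g: "g e \<in> e \<and> g e \<notin> S" if "e \<in> ?N" for e
      using that unfolding g_def by (metis (no_types, lifting) mem_Collect_eq someI_ex subsetI)
    have inj: "inj_on g ?N"
    proof
      fix e f assume "e \<in> ?N" "f \<in> ?N" "g e = g f"
      then have "g e \<in> e \<inter> f" using g[of e] g[of f] by simp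
      then have "e \<inter> f \<noteq> {}" by blast
      moreover have "e \<in> M" "f \<in> M" using \<open>e \<in> ?N\<close> \<open>f \<in> ?N\<close> by auto
      ultimately show "e = f" using dj by blast
    qed
    have "g ` ?N \<subseteq> V - S" using g c2 by blast
    then have "card ?N \<le> card (V - S)"
      using card_inj_on_le[OF inj] assms(2) by blast
    also have "card (V - S) = n - 2" using card_Diff_subset[OF fS SV] cS assms(3) by simp
    finally have "card ?N \<le> n - 2" .
    then have "int (card ?P) - int (card ?N) \<ge> 4" using sp cM assms(1) by linarith
    then show ?thesis using gen[OF MV fM] by linarith
  qed
  show ?thesis
  proof (intro conjI allI impI)
    show "\<bar>sigma_sum \<sigma> (complete_edges V)\<bar> = int (n^2 + 11 * n + 2)" using A by simp
  next
    fix M assume "perfect_matching V M"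
    then show "\<bar>sigma_sum \<sigma> M\<bar> \<ge> 4" by (rule B)
  qed
qed

end
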